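(* Let $p:\{0,1\}^*\to[0,1]$ be a binary-coded probability distribution and consider the algorithm GenOpt described below, run on $p$ with fair random bits. For each $n\in\mathbb{N}$, the algorithm almost surely appends at least $n$ bits to $b$; the prefix $B_1\ldots B_n$ of $b$ has distribution $p_n$ (i.e. $\Pr(B_1\ldots B_n=s)=p(s)$ for every $s\in\{0,1\}^n$); and the algorithm, viewed as a generator producing $B_1\ldots B_n$, is entropy-optimal for $p_n$: the expected number of random bits drawn up to and including the moment the $n$-th bit is appended equals the minimum expected entropy cost over all random variate generators whose output distribution is $p_n$.
   Context: A binary-coded probability distribution is a map $p:\{0,1\}^*\to[0,1]$ with $p(\varepsilon)=1$ ($\varepsilon$ the empty string) and $p(b)=p(b0)+p(b1)$ for every finite binary string $b$. For $n\ge0$, $p_n$ denotes the discrete distribution on $\{0,1\}^n$ given by $s\mapsto p(s)$. Every real $z\in[0,1]$ has a unique concise binary expansion $z=(z_0.z_1z_2\ldots)_2=\sum_{i\ge0}z_i2^{-i}$ not ending in an infinite string of 1s; write $[z]_i:=z_i$. Algorithm GenOpt: it maintains a string $b$ (initially empty) and a counter $\ell$ (initially $0$) of random bits drawn, and repeats forever the following round, which appends one bit to $b$: if $[p(b0)]_\ell=1$ and $[p(b1)]_\ell=0$, append $0$; else if $[p(b0)]_\ell=0$ and $[p(b1)]_\ell=1$, append $1$; otherwise repeat: draw a fair random bit $x$ and set $\ell\leftarrow\ell+1$; if $x=0$ and $[p(b0)]_\ell=1$, append $0$ and end the round; if $x=1$ and $[p(b1)]_\ell=1$, append $1$ and end the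 round. A random variate generator for a distribution $q$ on $\{0,1\}^n$ is a partial map $Y:\{0,1\}^*\rightharpoonup\{0,1\}^n$ whose domain is prefix-free (if $u\in\mathrm{dom}(Y)$ then no proper extension of $u$ is in $\mathrm{dom}(Y)$) and exhaustive ($\sum_{u\in\mathrm{dom}(Y)}2^{-|u|}=1$), with $\sum_{u\in\mathrm{dom}(Y)}2^{-|u|}\mathbf{1}[Y(u)=s]=q(s)$ for all $s$; its expected entropy cost is $\sum_{u\in\mathrm{dom}(Y)}|u|\,2^{-|u|}$ (the expected number of fair input bits read). *)

theory Defs
  imports "HOL-Analysis.Analysis"
begin

text \<open>Binary strings are bool lists; False = 0, True = 1. Appending bit x to b is b @ [x].\<close>

definition bcpd :: "(bool list \<Rightarrow> real) \<Rightarrow> bool" where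
  "bcpd p \<longleftrightarrow> (\<forall>b. 0 \<le> p b \<and> p b \<le> 1) \<and> p [] = 1 \<and>
     (\<forall>b. p b = p (b @ [False]) + p (b @ [True]))"

text \<open>i-th digit of the concise binary expansion z = z_0.z_1z_2... of z in [0,1]
  (no expansion ending in infinitely many 1s): z_i = floor(2^i z) mod 2.\<close>
definition digit :: "real \<Rightarrow> nat \<Rightarrow> int" where
  "digit z i = \<lfloor>z * 2 ^ i\<rfloor> mod 2"

text \<open>Inner loop of a GenOpt round: draws bits from the finite input list;
  returns (appended bit, new counter, remaining input), or None if input runs out.\<close>
fun draw_loop :: "(bool list \<Rightarrow> real) \<Rightarrow> bool list \<Rightarrow> nat \<Rightarrow> bool list
    \<Rightarrow> (bool \<times> nat \<times> bool list) option" where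
  "draw_loop p b l [] = None"
| "draw_loop p b l (x # xs) =
     (if \<not> x \<and> digit (p (b @ [False])) (Suc l) = 1 then Some (False, Suc l, xs)
      else if x \<and> digit (p (b @ [True])) (Suc l) = 1 then Some (True, Suc l, xs)
      else draw_loop p b (Suc l) xs)"

definition genopt_round :: "(bool list \<Rightarrow> real) \<Rightarrow> bool list \<Rightarrow> nat \<Rightarrow> bool list
    \<Rightarrow> (bool \<times> nat \<times> bool list) option" where
  "genopt_round p b l u =
     (if digit (p (b @ [False])) l = 1 \<and> digit (p (b @ [True])) l = 0 then Some (False, l, u)
      else if digit (p (b @ [False])) l = 0 \<and> digit (p (b @ [True])) l = 1 then Some (True, l, u)
      else draw_loop p b l u)"

fun genopt_run :: "(bool list \<Rightarrow> real) \<Rightarrow> nat \<Rightarrow> bool list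
    \<Rightarrow> (bool list \<times> nat \<times> bool list) option" where
  "genopt_run p 0 u = Some ([], 0, u)"
| "genopt_run p (Suc n) u =
     (case genopt_run p n u of
        None \<Rightarrow> None
      | Some (b, l, r) \<Rightarrow>
          (case genopt_round p b l r of
             None \<Rightarrow> None
           | Some (x, l', r') \<Rightarrow> Some (b @ [x], l', r')))"

text \<open>GenOpt viewed as a generator for the first n output bits: input u is in the domain
  iff the n-th bit is appended exactly when all of u (and nothing more) has been drawn.\<close>
definition genopt_gen :: "(bool list \<Rightarrow> real) \<Rightarrow> nat \<Rightarrow> bool list \<Rightarrow> bool list option" where
  "genopt_gen p n u =
     (case genopt_run p n u of Some (b, l, r) \<Rightarrow> (if r = [] then Some b else None) | None \<Rightarrow> None)"

definition is_rvg :: "(bool list \<Rightarrow> bool list option) \<Rightarrow> nat \<Rightarrow> (bool list \<Rightarrow> real) \<Rightarrow> bool" where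
  "is_rvg Y n q \<longleftrightarrow>
     (\<forall>u \<in> dom Y. length (the (Y u)) = n) \<and>
     (\<forall>u \<in> dom Y. \<forall>v. v \<noteq> [] \<longrightarrow> u @ v \<notin> dom Y) \<and>
     ((\<lambda>u. (1/2::real) ^ length u) has_sum 1) (dom Y) \<and>
     (\<forall>s. length s = n \<longrightarrow>
        ((\<lambda>u. (1/2::real) ^ length u) has_sum q s) {u \<in> dom Y. Y u = Some s})"

text \<open>Expected entropy cost (possibly infinite, hence ennreal).\<close>
definition entropy_cost :: "(bool list \<Rightarrow> bool list option) \<Rightarrow> ennreal" where
  "entropy_cost Y = (\<Sum>\<^sub>\<infinity>u \<in> dom Y. ennreal (real (length u) * (1/2) ^ length u))"

end

theory Submission
  imports Defs
begin
definition dec :: "(bool list \<Rightarrow> real) \<Rightarrow> bool list \<Rightarrow> nat \<Rightarrow> bool option" where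
  "dec p b l = (if digit (p (b @ [False])) l = 1 \<and> digit (p (b @ [True])) l = 0 then Some False
      else if digit (p (b @ [False])) l = 0 \<and> digit (p (b @ [True])) l = 1 then Some True else None)"

definition stepf :: "(bool list \<Rightarrow> real) \<Rightarrow> bool list \<Rightarrow> nat \<Rightarrow> bool \<Rightarrow> (bool \<times> nat \<times> bool list) option" where
  "stepf p b k y = (if \<not> y \<and> digit (p (b @ [False])) k = 1 then Some (False, k, [])
      else if y \<and> digit (p (b @ [True])) k = 1 then Some (True, k, []) else None)"

lemma round_dec: "genopt_round p b l u = (case dec p b l of Some x \<Rightarrow> Some (x, l, u) | None \<Rightarrow> draw_loop p b l u)"
  unfolding genopt_round_def dec_def by auto

lemma dl_snoc: "draw_loop p b l (w @ [y]) = (case draw_loop p b l w of Some (x, l', r) \<Rightarrow> Some (x, l', r @ [y])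
    | None \<Rightarrow> stepf p b (Suc (l + length w)) y)"
  by (induction w arbitrary: l) (auto simp: stepf_def split: option.splits)

lemma dl_append: "draw_loop p b l u = Some (x, l', r) \<Longrightarrow> draw_loop p b l (u @ v) = Some (x, l', r @ v)"
  by (induction u arbitrary: l) (auto split: if_splits)

lemma dl_suffix: "draw_loop p b l u = Some (x, l', r) \<Longrightarrow> \<exists>w. u = w @ r \<and> l' = l + length w \<and> w \<noteq> []"
proof (induction u arbitrary: l)
  case Nil then show ?case by simp
next
  case (Cons z u)
  show ?case
  proof (cases "(\<not> z \<and> digit (p (b @ [False])) (Suc l) = 1) \<or> (z \<and> digit (p (b @ [True])) (Suc l) = 1)")
    case True
    then show ?thesis using Cons.prems by (auto split: if_splits)
  next
    case False
    then have "draw_loop p b (Suc l) u = Some (x, l', r)" using Cons.prems by (auto split: if_splits)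
    from Cons.IH[OF this] obtain w where "u = w @ r" "l' = Suc l + length w" by blast
    then show ?thesis by (intro exI[of _ "z # w"]) auto
  qed
qed

lemma dl_cut: "draw_loop p b l (u @ v) = Some (x, l', r @ v) \<Longrightarrow> draw_loop p b l u = Some (x, l', r)"
proof (induction u arbitrary: l)
  case Nil
  from dl_suffix[OF Nil[simplified]] obtain w where "v = w @ r @ v" "w \<noteq> []" by blast
  then have "length v = length w + length r + length v" by (metis append.assoc length_append)
  with \<open>w \<noteq> []\<close> show ?case by simp
next
  case (Cons z u)
  then show ?case by (auto split: if_splits)
qed

lemma round_append:
  assumes "genopt_round p b l u = Some (x, l', r)" shows "genopt_round p b l (u @ v) = Some (x, l', r @ v)"
proof (cases "dec p b l")
  case None
  with assms have h: "draw_loop p b l u = Some (x, l', r)" by (simp add: round_dec)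
  with None show ?thesis by (simp add: round_dec dl_append[OF h])
next
  case (Some y) with assms show ?thesis by (simp add: round_dec)
qed

lemma round_suffix: "genopt_round p b l u = Some (x, l', r) \<Longrightarrow> \<exists>w. u = w @ r \<and> l' = l + length w"
proof (cases "dec p b l")
  case None
  assume "genopt_round p b l u = Some (x, l', r)"
  then have "draw_loop p b l u = Some (x, l', r)" using None by (simp add: round_dec)
  from dl_suffix[OF this] show ?thesis by blast
next
  case (Some y)
  assume "genopt_round p b l u = Some (x, l', r)"
  then show ?thesis using Some by (intro exI[of _ "[]"]) (simp add: round_dec)
qed

lemma round_cut:
  assumes "genopt_round p b l (u @ v) = Some (x, l', r @ v)" shows "genopt_round p b l u = Some (x, l', r)"
proof (cases "dec p b l")
  case None
  with assms have h: "draw_loop p b l (u @ v) = Some (x, l', r @ v)" by (simp add: round_dec)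
  with None show ?thesis by (simp add: round_dec dl_cut[OF h])
next
  case (Some y) with assms show ?thesis by (simp add: round_dec)
qed

lemma round_snoc: "genopt_round p b l (w @ [y]) = (case genopt_round p b l w of Some (x, l', r) \<Rightarrow> Some (x, l', r @ [y])
    | None \<Rightarrow> stepf p b (Suc (l + length w)) y)"
  by (cases "dec p b l") (auto simp: round_dec dl_snoc)

lemma round_Nil: "genopt_round p b l [] = (case dec p b l of Some x \<Rightarrow> Some (x, l, []) | None \<Rightarrow> None)"
  by (cases "dec p b l") (auto simp: round_dec)


lemma run_Suc_elim:
  assumes "genopt_run p (Suc n) u = Some (b, l, r)"
  obtains b0 l0 r0 x where "genopt_run p n u = Some (b0, l0, r0)" "genopt_round p b0 l0 r0 = Some (x, l, r)" "b = b0 @ [x]"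
proof -
  obtain b0 l0 r0 where h1: "genopt_run p n u = Some (b0, l0, r0)"
    using assms by (cases "genopt_run p n u") auto
  obtain x l1 r1 where h2: "genopt_round p b0 l0 r0 = Some (x, l1, r1)"
    using assms h1 by (cases "genopt_round p b0 l0 r0") auto
  have "b = b0 @ [x]" "l1 = l" "r1 = r" using assms h1 h2 by auto
  then show ?thesis using that h1 h2 by blast
qed

lemma run_append: "genopt_run p n u = Some (b, l, r) \<Longrightarrow> genopt_run p n (u @ v) = Some (b, l, r @ v)"
proof (induction n arbitrary: b l r)
  case 0 then show ?case by auto
next
  case (Suc n)
  obtain b0 l0 r0 x where h: "genopt_run p n u = Some (b0, l0, r0)" "genopt_round p b0 l0 r0 = Some (x, l, r)"
    "b = b0 @ [x]" by (rule run_Suc_elim[OF Suc.prems])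
  have "genopt_run p n (u @ v) = Some (b0, l0, r0 @ v)" by (rule Suc.IH[OF h(1)])
  moreover have "genopt_round p b0 l0 (r0 @ v) = Some (x, l, r @ v)" by (rule round_append[OF h(2)])
  ultimately show ?case using h(3) by simp
qed

lemma run_suffix: "genopt_run p n u = Some (b, l, r) \<Longrightarrow> length b = n \<and> (\<exists>w. u = w @ r \<and> l = length w)"
proof (induction n arbitrary: b l r)
  case 0 then show ?case by (intro conjI exI[of _ "[]"]) auto
next
  case (Suc n)
  obtain b0 l0 r0 x where h: "genopt_run p n u = Some (b0, l0, r0)" "genopt_round p b0 l0 r0 = Some (x, l, r)"
    "b = b0 @ [x]" by (rule run_Suc_elim[OF Suc.prems])
  from Suc.IH[OF h(1)] obtain w where "length b0 = n" "u = w @ r0" "l0 = length w" by blast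
  moreover from round_suffix[OF h(2)] obtain w' where "r0 = w' @ r" "l = l0 + length w'" by blast
  ultimately show ?case using h(3) by (intro conjI exI[of _ "w @ w'"]) auto
qed

lemma run_cut: "genopt_run p n (u @ v) = Some (b, l, r @ v) \<Longrightarrow> genopt_run p n u = Some (b, l, r)"
proof (induction n arbitrary: b l r)
  case 0 then show ?case by auto
next
  case (Suc n)
  obtain b0 l0 r0 x where h: "genopt_run p n (u @ v) = Some (b0, l0, r0)" "genopt_round p b0 l0 r0 = Some (x, l, r @ v)"
    "b = b0 @ [x]" by (rule run_Suc_elim[OF Suc.prems])
  from round_suffix[OF h(2)] obtain w where w: "r0 = (w @ r) @ v" by auto
  from Suc.IH[of b0 l0 "w @ r"] h(1) w have "genopt_run p n u = Some (b0, l0, w @ r)" by simp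
  moreover from round_cut[of p b0 l0 "w @ r" v x l r] h(2) w have "genopt_round p b0 l0 (w @ r) = Some (x, l, r)" by simp
  ultimately show ?case using h(3) by simp
qed

lemma run_Suc_iff: "genopt_run p (Suc n) u = Some (b @ [x], m, r') \<longleftrightarrow>
   (\<exists>l r. genopt_run p n u = Some (b, l, r) \<and> genopt_round p b l r = Some (x, m, r'))"
  by (auto split: option.splits)

definition Arr :: "(bool list \<Rightarrow> real) \<Rightarrow> bool list \<Rightarrow> nat \<Rightarrow> bool list set" where
  "Arr p b m = {u. length u = m \<and> genopt_run p (length b) u = Some (b, m, [])}"

definition Pend :: "(bool list \<Rightarrow> real) \<Rightarrow> bool list \<Rightarrow> nat \<Rightarrow> bool list set" where
  "Pend p b m = {u. length u = m \<and> (\<exists>l r. genopt_run p (length b) u = Some (b, l, r) \<and> genopt_round p b l r = None)}"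

lemma finite_len: "finite {u :: bool list. length u = m}"
  using finite_lists_length_eq[of "UNIV :: bool set" m] by simp

lemma finite_Arr: "finite (Arr p b m)"
  by (rule finite_subset[OF _ finite_len[of m]]) (auto simp: Arr_def)

lemma finite_Pend: "finite (Pend p b m)"
  by (rule finite_subset[OF _ finite_len[of m]]) (auto simp: Pend_def)

lemma Arr_snoc: "Arr p (b @ [x]) m = (if dec p b m = Some x then Arr p b m else {}) \<union>
   (if 0 < m \<and> digit (p (b @ [x])) m = 1 then (\<lambda>v. v @ [x]) ` Pend p b (m - 1) else {})"
proof (intro equalityI subsetI)
  fix u assume "u \<in> Arr p (b @ [x]) m"
  then have len: "length u = m" and "genopt_run p (Suc (length b)) u = Some (b @ [x], m, [])"
    by (auto simp: Arr_def)
  then obtain l r where h: "genopt_run p (length b) u = Some (b, l, r)" "genopt_round p b l r = Some (x, m, [])"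
    using run_Suc_iff by blast
  obtain z where z: "u = z @ r" "l = length z" using run_suffix[OF h(1)] by blast
  show "u \<in> (if dec p b m = Some x then Arr p b m else {}) \<union>
   (if 0 < m \<and> digit (p (b @ [x])) m = 1 then (\<lambda>v. v @ [x]) ` Pend p b (m - 1) else {})"
  proof (cases r rule: rev_exhaust)
    case Nil
    with z len have "l = m" by simp
    with h Nil have "dec p b m = Some x" by (auto simp: round_Nil split: option.splits)
    with h Nil \<open>l = m\<close> len show ?thesis by (auto simp: Arr_def)
  next
    case (snoc w y)
    have "genopt_round p b l w = None \<and> stepf p b (Suc (l + length w)) y = Some (x, m, [])"
      using h(2) unfolding snoc round_snoc by (auto split: option.splits)
    then have w: "genopt_round p b l w = None" "y = x" "m = Suc (l + length w)" "digit (p (b @ [x])) m = 1"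
      by (auto simp: stepf_def split: if_splits)
    have "genopt_run p (length b) ((z @ w) @ [y]) = Some (b, l, w @ [y])" using h(1) z snoc by simp
    then have "genopt_run p (length b) (z @ w) = Some (b, l, w)" by (rule run_cut)
    then have "z @ w \<in> Pend p b (m - 1)" using w z by (auto simp: Pend_def)
    moreover have "u = (z @ w) @ [x]" using z snoc w by simp
    ultimately show ?thesis using w by auto
  qed
next
  fix u assume u: "u \<in> (if dec p b m = Some x then Arr p b m else {}) \<union>
   (if 0 < m \<and> digit (p (b @ [x])) m = 1 then (\<lambda>v. v @ [x]) ` Pend p b (m - 1) else {})"
  show "u \<in> Arr p (b @ [x]) m"
  proof (cases "u \<in> (if dec p b m = Some x then Arr p b m else {})")
    case True
    then have "dec p b m = Some x" "length u = m" "genopt_run p (length b) u = Some (b, m, [])"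
      by (auto simp: Arr_def split: if_splits)
    then show ?thesis by (auto simp: Arr_def round_Nil)
  next
    case False
    with u obtain v where v: "0 < m" "digit (p (b @ [x])) m = 1" "v \<in> Pend p b (m - 1)" "u = v @ [x]"
      by (auto split: if_splits)
    then obtain l r where lr: "length v = m - 1" "genopt_run p (length b) v = Some (b, l, r)" "genopt_round p b l r = None"
      by (auto simp: Pend_def)
    obtain z where z: "v = z @ r" "l = length z" using run_suffix[OF lr(2)] by blast
    have "genopt_run p (length b) u = Some (b, l, r @ [x])" using run_append[OF lr(2)] v by simp
    moreover have "genopt_round p b l (r @ [x]) = Some (x, m, [])"
      using lr z v by (cases x) (auto simp: round_snoc stepf_def)
    ultimately show ?thesis using v lr by (auto simp: Arr_def)
  qed
qed

lemma Pend_snoc: "Pend p b m = (if dec p b m = None then Arr p b m else {}) \<union>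
   (if 0 < m then (\<lambda>(v, y). v @ [y]) ` (Pend p b (m - 1) \<times> {y. stepf p b m y = None}) else {})"
proof (intro equalityI subsetI)
  fix u assume "u \<in> Pend p b m"
  then obtain l r where len: "length u = m" and h: "genopt_run p (length b) u = Some (b, l, r)" "genopt_round p b l r = None"
    by (auto simp: Pend_def)
  obtain z where z: "u = z @ r" "l = length z" using run_suffix[OF h(1)] by blast
  show "u \<in> (if dec p b m = None then Arr p b m else {}) \<union>
   (if 0 < m then (\<lambda>(v, y). v @ [y]) ` (Pend p b (m - 1) \<times> {y. stepf p b m y = None}) else {})"
  proof (cases r rule: rev_exhaust)
    case Nil
    with z len have "l = m" by simp
    with h Nil have "dec p b m = None" by (auto simp: round_Nil split: option.splits)
    with h Nil \<open>l = m\<close> len show ?thesis by (auto simp: Arr_def)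
  next
    case (snoc w y)
    have w: "genopt_round p b l w = None" "stepf p b (Suc (l + length w)) y = None"
      using h(2) unfolding snoc round_snoc by (auto split: option.splits)
    have m: "m = Suc (l + length w)" using len z snoc by simp
    have "genopt_run p (length b) ((z @ w) @ [y]) = Some (b, l, w @ [y])" using h(1) z snoc by simp
    then have "genopt_run p (length b) (z @ w) = Some (b, l, w)" by (rule run_cut)
    then have "z @ w \<in> Pend p b (m - 1)" using w z m by (auto simp: Pend_def)
    moreover have "u = (z @ w) @ [y]" using z snoc by simp
    ultimately show ?thesis using w m by force
  qed
next
  fix u assume u: "u \<in> (if dec p b m = None then Arr p b m else {}) \<union>
   (if 0 < m then (\<lambda>(v, y). v @ [y]) ` (Pend p b (m - 1) \<times> {y. stepf p b m y = None}) else {})"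
  show "u \<in> Pend p b m"
  proof (cases "u \<in> (if dec p b m = None then Arr p b m else {})")
    case True
    then have "dec p b m = None" "length u = m" "genopt_run p (length b) u = Some (b, m, [])"
      by (auto simp: Arr_def split: if_splits)
    then show ?thesis by (auto simp: Pend_def round_Nil)
  next
    case False
    with u obtain v y where v: "0 < m" "stepf p b m y = None" "v \<in> Pend p b (m - 1)" "u = v @ [y]"
      by (auto split: if_splits)
    then obtain l r where lr: "length v = m - 1" "genopt_run p (length b) v = Some (b, l, r)" "genopt_round p b l r = None"
      by (auto simp: Pend_def)
    obtain z where z: "v = z @ r" "l = length z" using run_suffix[OF lr(2)] by blast
    have "genopt_run p (length b) u = Some (b, l, r @ [y])" using run_append[OF lr(2)] v by simp
    moreover have "genopt_round p b l (r @ [y]) = None"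
      using lr z v by (auto simp: round_snoc)
    ultimately show ?thesis using v lr by (auto simp: Pend_def)
  qed
qed

lemma Arr_Pend_disj: "Arr p b m \<inter> (\<lambda>v. v @ [y]) ` Pend p b k = {}"
proof -
  { fix v assume "v \<in> Pend p b k" "v @ [y] \<in> Arr p b m"
    then obtain l r where "genopt_run p (length b) v = Some (b, l, r)" by (auto simp: Pend_def)
    from run_append[OF this, of "[y]"] \<open>v @ [y] \<in> Arr p b m\<close> have False by (auto simp: Arr_def) }
  then show ?thesis by blast
qed

lemma Arr_Pend_disj2: "Arr p b m \<inter> (\<lambda>(v, y). v @ [y]) ` (Pend p b k \<times> Y) = {}"
  using Arr_Pend_disj[of p b m] by fastforce

lemma card_Arr_snoc: "card (Arr p (b @ [x]) m) = (if dec p b m = Some x then card (Arr p b m) else 0) +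
   (if 0 < m \<and> digit (p (b @ [x])) m = 1 then card (Pend p b (m - 1)) else 0)"
proof -
  have inj: "inj_on (\<lambda>v. v @ [x]) A" for A :: "bool list set" by (auto simp: inj_on_def)
  show ?thesis
    apply (subst Arr_snoc)
    apply (subst card_Un_disjoint)
    using Arr_Pend_disj[of p b m x "m - 1"] by (auto simp: finite_Arr finite_Pend card_image[OF inj])
qed

lemma card_stepf: "card {y. stepf p b m y = None} =
  (if digit (p (b @ [False])) m = 1 then 0 else 1) + (if digit (p (b @ [True])) m = 1 then 0 else 1)"
proof -
  have "{y. stepf p b m y = None} = (if digit (p (b @ [False])) m = 1 then {} else {False}) \<union>
     (if digit (p (b @ [True])) m = 1 then {} else {True})"
    by (auto simp: stepf_def split: if_splits)
  then show ?thesis by auto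
qed

lemma card_Pend: "card (Pend p b m) = (if dec p b m = None then card (Arr p b m) else 0) +
   (if 0 < m then card (Pend p b (m - 1)) * card {y. stepf p b m y = None} else 0)"
proof -
  have inj: "inj_on (\<lambda>(v, y). v @ [y]) A" for A :: "(bool list \<times> bool) set" by (auto simp: inj_on_def)
  show ?thesis
    apply (subst Pend_snoc)
    apply (subst card_Un_disjoint)
    using Arr_Pend_disj2[of p b m "m - 1" "{y. stepf p b m y = None}"]
    by (auto simp: finite_Arr finite_Pend card_image[OF inj] card_cartesian_product)
qed

definition Fl :: "real \<Rightarrow> nat \<Rightarrow> int" where "Fl z k = \<lfloor>z * 2 ^ k\<rfloor>"

lemma digit_cases: "digit z k = 0 \<or> digit z k = 1"
  unfolding digit_def by presburger

lemma Fl_Suc: "Fl z (Suc k) = 2 * Fl z k + digit z (Suc k)"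
proof -
  define y where "y = z * 2 ^ k"
  have e: "z * 2 ^ Suc k = 2 * y" by (simp add: y_def)
  have a: "of_int \<lfloor>y\<rfloor> \<le> y" "y < of_int \<lfloor>y\<rfloor> + 1" by linarith+
  have b: "of_int \<lfloor>2 * y\<rfloor> \<le> 2 * y" "2 * y < of_int \<lfloor>2 * y\<rfloor> + 1" by linarith+
  have "2 * \<lfloor>y\<rfloor> \<le> \<lfloor>2 * y\<rfloor>" using a b by linarith
  moreover have "\<lfloor>2 * y\<rfloor> \<le> 2 * \<lfloor>y\<rfloor> + 1" using a b by linarith
  ultimately have "\<lfloor>2 * y\<rfloor> = 2 * \<lfloor>y\<rfloor> + \<lfloor>2 * y\<rfloor> mod 2" by presburger
  then show ?thesis unfolding Fl_def digit_def e y_def by simp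
qed

lemma Fl_add: "0 \<le> Fl (a + c) k - Fl a k - Fl c k \<and> Fl (a + c) k - Fl a k - Fl c k \<le> 1"
proof -
  define x y where "x = a * 2 ^ k" and "y = c * 2 ^ k"
  have e: "(a + c) * 2 ^ k = x + y" by (simp add: x_def y_def algebra_simps)
  have "of_int \<lfloor>x\<rfloor> \<le> x" "x < of_int \<lfloor>x\<rfloor> + 1" "of_int \<lfloor>y\<rfloor> \<le> y" "y < of_int \<lfloor>y\<rfloor> + 1"
    "of_int \<lfloor>x + y\<rfloor> \<le> x + y" "x + y < of_int \<lfloor>x + y\<rfloor> + 1" by linarith+
  then have "\<lfloor>x\<rfloor> + \<lfloor>y\<rfloor> \<le> \<lfloor>x + y\<rfloor>" "\<lfloor>x + y\<rfloor> \<le> \<lfloor>x\<rfloor> + \<lfloor>y\<rfloor> + 1" by linarith+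
  then show ?thesis unfolding Fl_def e x_def[symmetric] y_def[symmetric] by simp
qed

lemma Fl0: "0 \<le> z \<Longrightarrow> z \<le> 1 \<Longrightarrow> Fl z 0 = digit z 0"
proof -
  assume z: "0 \<le> z" "z \<le> 1"
  have "\<lfloor>z\<rfloor> = 0 \<or> \<lfloor>z\<rfloor> = 1"
  proof (cases "z = 1")
    case True then show ?thesis by simp
  next
    case False
    then have "z < 1" using z by simp
    then have "\<lfloor>z\<rfloor> = 0" using z by (simp add: floor_eq_iff)
    then show ?thesis by simp
  qed
  then show ?thesis unfolding Fl_def digit_def by (elim disjE) simp_all
qed

lemma digit_one: "digit 1 m = (if m = 0 then 1 else 0)"
proof (cases m)
  case 0 then show ?thesis by (simp add: digit_def)
next
  case (Suc k)
  have e: "(1::real) * 2 ^ m = of_int ((2::int) ^ m)" by simp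
  have "\<lfloor>(1::real) * 2 ^ m\<rfloor> = 2 ^ m" unfolding e by (rule floor_of_int)
  moreover have "(2::int) ^ m mod 2 = 0" using Suc by simp
  ultimately show ?thesis unfolding digit_def using Suc by simp
qed

lemma Arr_Nil: "Arr p [] m = (if m = 0 then {[]} else {})"
  by (auto simp: Arr_def)

lemma bcpd_01: "bcpd p \<Longrightarrow> 0 \<le> p b \<and> p b \<le> 1"
  unfolding bcpd_def by blast

lemma bcpd_split: "bcpd p \<Longrightarrow> p b = p (b @ [False]) + p (b @ [True])"
  unfolding bcpd_def by blast

lemma ar_pend: fixes Z A C P :: int
  assumes "Z = 0 \<or> Z = 1" "A = 0 \<or> A = 1" "C = 0 \<or> C = 1" "P = 0 \<or> P = 1" "0 \<le> 2*P + Z - A - C" "2*P + Z - A - C \<le> 1"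
  shows "(if \<not> ((A = 1 \<and> C = 0) \<or> (A = 0 \<and> C = 1)) then Z else 0) + P * ((if A = 1 then 0 else 1) + (if C = 1 then 0 else 1)) = 2*P + Z - A - C"
  using assms(1-4) apply (elim disjE) using assms(5,6) apply simp_all done

lemma ar_arr: fixes Z A C P :: int
  assumes "Z = 0 \<or> Z = 1" "A = 0 \<or> A = 1" "C = 0 \<or> C = 1" "P = 0 \<or> P = 1" "0 \<le> 2*P + Z - A - C" "2*P + Z - A - C \<le> 1"
  shows "(if A = 1 \<and> C = 0 then Z else 0) + (if A = 1 then P else 0) = A"
    "(if A = 0 \<and> C = 1 then Z else 0) + (if C = 1 then P else 0) = C"
  using assms(1-4) apply (elim disjE) using assms(5,6) apply simp_all
  using assms(1-4) apply (elim disjE) using assms(5,6) apply simp_all done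

lemma dec_None: "dec p b m = None \<longleftrightarrow> \<not> ((digit (p (b @ [False])) m = 1 \<and> digit (p (b @ [True])) m = 0) \<or>
   (digit (p (b @ [False])) m = 0 \<and> digit (p (b @ [True])) m = 1))"
  by (simp add: dec_def)

lemma dec_Some: "dec p b m = Some x \<longleftrightarrow> (if x then digit (p (b @ [False])) m = 0 \<and> digit (p (b @ [True])) m = 1
   else digit (p (b @ [False])) m = 1 \<and> digit (p (b @ [True])) m = 0)"
  by (cases x) (auto simp: dec_def)

lemma P01: "0 \<le> (P::int) \<Longrightarrow> P \<le> 1 \<Longrightarrow> P = 0 \<or> P = 1" by auto

lemma count_Pend:
  assumes bc: "bcpd p" and HA: "\<And>m. int (card (Arr p b m)) = digit (p b) m"
  shows "int (card (Pend p b m)) = Fl (p b) m - Fl (p (b @ [False])) m - Fl (p (b @ [True])) m"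
proof (induction m)
  case 0
  have s: "p b = p (b @ [False]) + p (b @ [True])" by (rule bcpd_split[OF bc])
  have r: "Fl (p b) 0 = digit (p b) 0" "Fl (p (b @ [False])) 0 = digit (p (b @ [False])) 0"
     "Fl (p (b @ [True])) 0 = digit (p (b @ [True])) 0" using bcpd_01[OF bc] by (auto intro!: Fl0)
  have N: "0 \<le> Fl (p b) 0 - Fl (p (b @ [False])) 0 - Fl (p (b @ [True])) 0 \<and> Fl (p b) 0 - Fl (p (b @ [False])) 0 - Fl (p (b @ [True])) 0 \<le> 1"
    using Fl_add[of "p (b @ [False])" "p (b @ [True])" 0] s by simp
  have "int (card (Pend p b 0)) = (if dec p b 0 = None then digit (p b) 0 else 0)"
    using HA[of 0] by (simp add: card_Pend[of p b 0])
  also have "\<dots> = (if \<not> ((digit (p (b @ [False])) 0 = 1 \<and> digit (p (b @ [True])) 0 = 0) \<or> (digit (p (b @ [False])) 0 = 0 \<and> digit (p (b @ [True])) 0 = 1)) then digit (p b) 0 else 0)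
     + 0 * ((if digit (p (b @ [False])) 0 = 1 then 0 else 1) + (if digit (p (b @ [True])) 0 = 1 then 0 else 1))"
    unfolding dec_None by simp
  also have "\<dots> = 2 * 0 + digit (p b) 0 - digit (p (b @ [False])) 0 - digit (p (b @ [True])) 0"
    by (rule ar_pend[OF digit_cases digit_cases digit_cases]) (use N r in auto)
  finally show ?case using r by simp
next
  case (Suc k)
  have s: "p b = p (b @ [False]) + p (b @ [True])" by (rule bcpd_split[OF bc])
  have N: "0 \<le> Fl (p b) (Suc k) - Fl (p (b @ [False])) (Suc k) - Fl (p (b @ [True])) (Suc k) \<and>
      Fl (p b) (Suc k) - Fl (p (b @ [False])) (Suc k) - Fl (p (b @ [True])) (Suc k) \<le> 1"
    using Fl_add[of "p (b @ [False])" "p (b @ [True])" "Suc k"] s by simp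
  have N0: "0 \<le> Fl (p b) k - Fl (p (b @ [False])) k - Fl (p (b @ [True])) k \<and>
      Fl (p b) k - Fl (p (b @ [False])) k - Fl (p (b @ [True])) k \<le> 1"
    using Fl_add[of "p (b @ [False])" "p (b @ [True])" k] s by simp
  define P where "P = Fl (p b) k - Fl (p (b @ [False])) k - Fl (p (b @ [True])) k"
  have c: "int (card (Pend p b (Suc k))) = (if dec p b (Suc k) = None then digit (p b) (Suc k) else 0) +
     P * ((if digit (p (b @ [False])) (Suc k) = 1 then 0 else 1) + (if digit (p (b @ [True])) (Suc k) = 1 then 0 else 1))"
    using HA[of "Suc k"] Suc.IH unfolding P_def by (simp add: card_Pend[of p b "Suc k"] card_stepf)
  have e: "Fl (p b) (Suc k) - Fl (p (b @ [False])) (Suc k) - Fl (p (b @ [True])) (Suc k) =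
     2 * P + digit (p b) (Suc k) - digit (p (b @ [False])) (Suc k) - digit (p (b @ [True])) (Suc k)"
    unfolding Fl_Suc P_def by simp
  show ?case unfolding c e unfolding dec_None
    by (rule ar_pend[OF digit_cases digit_cases digit_cases P01]) (use N0 N e in \<open>simp_all add: P_def\<close>)
qed

lemma count_Arr_snoc:
  assumes bc: "bcpd p" and HA: "\<And>m. int (card (Arr p b m)) = digit (p b) m"
  shows "int (card (Arr p (b @ [x]) m)) = digit (p (b @ [x])) m"
proof (cases m)
  case 0
  have s: "p b = p (b @ [False]) + p (b @ [True])" by (rule bcpd_split[OF bc])
  have r: "Fl (p b) 0 = digit (p b) 0" "Fl (p (b @ [False])) 0 = digit (p (b @ [False])) 0"
     "Fl (p (b @ [True])) 0 = digit (p (b @ [True])) 0" using bcpd_01[OF bc] by (auto intro!: Fl0)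
  have N: "0 \<le> 2 * 0 + digit (p b) 0 - digit (p (b @ [False])) 0 - digit (p (b @ [True])) 0 \<and>
      2 * 0 + digit (p b) 0 - digit (p (b @ [False])) 0 - digit (p (b @ [True])) 0 \<le> 1"
    using Fl_add[of "p (b @ [False])" "p (b @ [True])" 0] s r by simp
  have "int (card (Arr p (b @ [x]) 0)) = (if dec p b 0 = Some x then digit (p b) 0 else 0)"
    using HA[of 0] by (simp add: card_Arr_snoc[of p b x 0])
  also have "\<dots> = digit (p (b @ [x])) 0"
    using ar_arr[OF digit_cases digit_cases digit_cases, of 0 "p b" 0 "p (b @ [False])" 0 "p (b @ [True])" 0] N
    unfolding dec_Some by (cases x) simp_all
  finally show ?thesis using 0 by simp
next
  case (Suc k)
  have s: "p b = p (b @ [False]) + p (b @ [True])" by (rule bcpd_split[OF bc])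
  have N: "0 \<le> Fl (p b) (Suc k) - Fl (p (b @ [False])) (Suc k) - Fl (p (b @ [True])) (Suc k) \<and>
      Fl (p b) (Suc k) - Fl (p (b @ [False])) (Suc k) - Fl (p (b @ [True])) (Suc k) \<le> 1"
    using Fl_add[of "p (b @ [False])" "p (b @ [True])" "Suc k"] s by simp
  have N0: "0 \<le> Fl (p b) k - Fl (p (b @ [False])) k - Fl (p (b @ [True])) k \<and>
      Fl (p b) k - Fl (p (b @ [False])) k - Fl (p (b @ [True])) k \<le> 1"
    using Fl_add[of "p (b @ [False])" "p (b @ [True])" k] s by simp
  define P where "P = Fl (p b) k - Fl (p (b @ [False])) k - Fl (p (b @ [True])) k"
  have c: "int (card (Arr p (b @ [x]) (Suc k))) = (if dec p b (Suc k) = Some x then digit (p b) (Suc k) else 0) +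
     (if digit (p (b @ [x])) (Suc k) = 1 then P else 0)"
    using HA[of "Suc k"] count_Pend[OF bc HA, of k] unfolding P_def by (simp add: card_Arr_snoc[of p b x "Suc k"])
  have e: "Fl (p b) (Suc k) - Fl (p (b @ [False])) (Suc k) - Fl (p (b @ [True])) (Suc k) =
     2 * P + digit (p b) (Suc k) - digit (p (b @ [False])) (Suc k) - digit (p (b @ [True])) (Suc k)"
    unfolding Fl_Suc P_def by simp
  have P: "P = 0 \<or> P = 1" using N0 P_def by auto
  have N': "0 \<le> 2 * P + digit (p b) (Suc k) - digit (p (b @ [False])) (Suc k) - digit (p (b @ [True])) (Suc k)"
     "2 * P + digit (p b) (Suc k) - digit (p (b @ [False])) (Suc k) - digit (p (b @ [True])) (Suc k) \<le> 1"
    using N e by simp_all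
  show ?thesis unfolding Suc c
    using ar_arr[OF digit_cases digit_cases digit_cases P N'(1) N'(2)]
    unfolding dec_Some by (cases x) simp_all
qed

lemma count_Arr:
  assumes bc: "bcpd p"
  shows "int (card (Arr p b m)) = digit (p b) m"
proof (induction b arbitrary: m rule: rev_induct)
  case Nil
  have "p [] = 1" using bc unfolding bcpd_def by blast
  then show ?case by (simp add: Arr_Nil digit_one)
next
  case (snoc x b)
  show ?case by (rule count_Arr_snoc[OF bc snoc.IH])
qed

definition hw :: "bool list \<Rightarrow> real" where "hw u = (1/2) ^ length u"

definition K :: "bool list set \<Rightarrow> nat \<Rightarrow> real" where "K A J = sum hw {u \<in> A. length u \<le> J}"

lemma hw_nonneg: "0 \<le> hw u" by (simp add: hw_def)

lemma finite_le: "finite {u :: bool list. length u \<le> J}"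
  using finite_lists_length_le[of "UNIV :: bool set" J] by simp

lemma finite_lvl: "finite {u \<in> A. length (u :: bool list) \<le> J}"
  by (rule finite_subset[OF _ finite_le[of J]]) auto

lemma K_mono: "J \<le> J' \<Longrightarrow> K A J \<le> K A J'"
  unfolding K_def by (rule sum_mono2[OF finite_lvl]) (auto simp: hw_nonneg)

lemma K_incseq: "incseq (K A)"
  by (simp add: incseq_def K_mono)

lemma finite_bound: "finite (Y :: bool list set) \<Longrightarrow> \<exists>J. \<forall>u\<in>Y. length u \<le> J"
  by (intro exI[of _ "\<Sum>u\<in>Y. length u"]) (auto intro: member_le_sum)

lemma sub_lvl: "finite Y \<Longrightarrow> Y \<subseteq> A \<Longrightarrow> \<exists>J. Y \<subseteq> {u \<in> A. length (u :: bool list) \<le> J}"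
  using finite_bound[of Y] by blast

lemma hs_levels:
  assumes lim: "K A \<longlonglongrightarrow> x"
  shows "(hw has_sum x) A"
  unfolding has_sum_def
proof (rule order_tendstoI)
  fix a assume "a < x"
  then have "eventually (\<lambda>J. a < K A J) sequentially" using lim order_tendstoD(1) by blast
  then obtain J where J: "a < K A J" by (auto simp: eventually_sequentially)
  show "eventually (\<lambda>Y. a < sum hw Y) (finite_subsets_at_top A)"
    unfolding eventually_finite_subsets_at_top
  proof (intro exI[of _ "{u \<in> A. length u \<le> J}"] conjI allI impI)
    fix Y assume Y: "finite Y \<and> {u \<in> A. length u \<le> J} \<subseteq> Y \<and> Y \<subseteq> A"
    have "K A J \<le> sum hw Y" unfolding K_def by (rule sum_mono2) (use Y in \<open>auto simp: hw_nonneg\<close>)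
    then show "a < sum hw Y" using J by simp
  qed (auto simp: finite_lvl)
next
  fix a assume "x < a"
  show "eventually (\<lambda>Y. sum hw Y < a) (finite_subsets_at_top A)"
  proof (rule eventually_finite_subsets_at_top_weakI)
    fix Y assume Y: "finite Y" "Y \<subseteq> A"
    then obtain J where J: "Y \<subseteq> {u \<in> A. length u \<le> J}" using sub_lvl by blast
    have "sum hw Y \<le> K A J" unfolding K_def by (rule sum_mono2[OF finite_lvl J]) (auto simp: hw_nonneg)
    also have "\<dots> \<le> x" by (rule incseq_le[OF K_incseq lim])
    finally show "sum hw Y < a" using \<open>x < a\<close> by simp
  qed
qed

lemma hs_fin_le:
  assumes "(hw has_sum x) A" "finite F" "F \<subseteq> A"
  shows "sum hw F \<le> x"
  by (rule has_sum_mono_neutral[OF has_sum_finite[OF assms(2)] assms(1)]) (use assms(3) in \<open>auto simp: hw_nonneg\<close>)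

lemma K_le: "(hw has_sum x) A \<Longrightarrow> K A J \<le> x"
  unfolding K_def by (rule hs_fin_le) (auto simp: finite_lvl)

lemma hs_conv:
  assumes hs: "(hw has_sum x) A"
  shows "K A \<longlonglongrightarrow> x"
proof (rule order_tendstoI)
  fix a assume "a < x"
  have "(sum hw \<longlongrightarrow> x) (finite_subsets_at_top A)" using hs by (simp add: has_sum_def)
  then have "eventually (\<lambda>Y. a < sum hw Y) (finite_subsets_at_top A)" using \<open>a < x\<close> order_tendstoD(1) by blast
  then obtain X where X: "finite X" "X \<subseteq> A" "a < sum hw X"
    unfolding eventually_finite_subsets_at_top by blast
  obtain J where J: "X \<subseteq> {u \<in> A. length u \<le> J}" using sub_lvl[OF X(1,2)] by blast
  have "sum hw X \<le> K A J" unfolding K_def by (rule sum_mono2[OF finite_lvl J]) (auto simp: hw_nonneg)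
  show "eventually (\<lambda>J. a < K A J) sequentially"
    unfolding eventually_sequentially
  proof (intro exI[of _ J] allI impI)
    fix J' assume "J \<le> J'"
    then have "K A J \<le> K A J'" by (rule K_mono)
    then show "a < K A J'" using X(3) \<open>sum hw X \<le> K A J\<close> by simp
  qed
next
  fix a assume "x < a"
  then show "eventually (\<lambda>J. K A J < a) sequentially" using K_le[OF hs] by (intro always_eventually allI) (meson le_less_trans)
qed

lemma gen_iff: "genopt_gen p n u = Some s \<longleftrightarrow> genopt_run p n u = Some (s, length u, [])"
proof
  assume a: "genopt_gen p n u = Some s"
  then obtain b l r where h: "genopt_run p n u = Some (b, l, r)"
    unfolding genopt_gen_def by (auto split: option.splits)
  with a have "r = []" "b = s" unfolding genopt_gen_def by (auto split: if_splits)
  with h run_suffix[OF h] show "genopt_run p n u = Some (s, length u, [])" by auto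
next
  assume "genopt_run p n u = Some (s, length u, [])"
  then show "genopt_gen p n u = Some s" unfolding genopt_gen_def by simp
qed

lemma gen_len: "genopt_gen p n u = Some s \<Longrightarrow> length s = n"
  using run_suffix gen_iff by blast

lemma gen_lvl: "length s = n \<Longrightarrow> {u \<in> {u. genopt_gen p n u = Some s}. length u = m} = Arr p s m"
  by (auto simp: Arr_def gen_iff)

lemma K_split_len: "K A J = (\<Sum>m\<le>J. real (card {u \<in> A. length u = m}) * (1/2) ^ m)"
proof (induction J)
  case 0
  have "{u \<in> A. length u \<le> 0} = {u \<in> A. length u = 0}" by auto
  moreover have "sum hw {u \<in> A. length u = 0} = real (card {u \<in> A. length u = 0}) * (1/2)^0"
    by (simp add: hw_def)
  ultimately show ?case by (simp add: K_def)
next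
  case (Suc J)
  have e: "{u \<in> A. length u \<le> Suc J} = {u \<in> A. length u \<le> J} \<union> {u \<in> A. length u = Suc J}" by auto
  have f: "finite {u \<in> A. length u = Suc J}"
    by (rule finite_subset[OF _ finite_lvl[of UNIV "Suc J"]]) auto
  have "sum hw {u \<in> A. length u = Suc J} = real (card {u \<in> A. length u = Suc J}) * (1/2) ^ Suc J"
  proof -
    have "sum hw {u \<in> A. length u = Suc J} = sum (\<lambda>_. (1/2::real) ^ Suc J) {u \<in> A. length u = Suc J}"
      by (rule sum.cong) (auto simp: hw_def)
    then show ?thesis by simp
  qed
  moreover have "K A (Suc J) = K A J + sum hw {u \<in> A. length u = Suc J}"
    unfolding K_def e by (rule sum.union_disjoint) (use f finite_lvl in auto)
  ultimately show ?case using Suc.IH by simp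
qed

lemma digit_sum: "0 \<le> z \<Longrightarrow> z \<le> 1 \<Longrightarrow> (\<Sum>m\<le>J. real_of_int (digit z m) * (1/2) ^ m) = Fl z J / 2 ^ J"
proof (induction J)
  case 0 then show ?case by (simp add: Fl0)
next
  case (Suc J)
  have "(\<Sum>m\<le>Suc J. real_of_int (digit z m) * (1/2) ^ m) = Fl z J / 2 ^ J + digit z (Suc J) * (1/2) ^ Suc J"
    using Suc by simp
  also have "\<dots> = Fl z (Suc J) / 2 ^ Suc J"
    unfolding Fl_Suc by (simp add: field_simps power_divide)
  finally show ?case .
qed

lemma Fl_lim: "(\<lambda>J. Fl z J / 2 ^ J) \<longlonglongrightarrow> z"
proof (rule tendsto_sandwich[of "\<lambda>J. z - (1/2) ^ J" _ sequentially "\<lambda>_. z"])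
  show "eventually (\<lambda>J. z - (1/2) ^ J \<le> Fl z J / 2 ^ J) sequentially"
  proof (intro always_eventually allI)
    fix J
    have "z * 2 ^ J - 1 \<le> Fl z J" unfolding Fl_def by linarith
    then have "(z * 2 ^ J - 1) / 2 ^ J \<le> Fl z J / 2 ^ J" by (simp add: divide_right_mono)
    then show "z - (1/2) ^ J \<le> Fl z J / 2 ^ J" by (simp add: field_simps power_divide)
  qed
  show "eventually (\<lambda>J. Fl z J / 2 ^ J \<le> z) sequentially"
  proof (intro always_eventually allI)
    fix J
    have "Fl z J \<le> z * 2 ^ J" unfolding Fl_def by linarith
    then show "Fl z J / 2 ^ J \<le> z" by (simp add: field_simps)
  qed
  show "(\<lambda>J. z - (1/2::real) ^ J) \<longlonglongrightarrow> z"
    using tendsto_diff[OF tendsto_const[of z] LIMSEQ_realpow_zero[of "1/2::real"]] by simp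
qed simp

lemma K_gen_s:
  assumes bc: "bcpd p" and len: "length s = n"
  shows "K {u. genopt_gen p n u = Some s} J = Fl (p s) J / 2 ^ J"
proof -
  have "K {u. genopt_gen p n u = Some s} J = (\<Sum>m\<le>J. real (card (Arr p s m)) * (1/2) ^ m)"
    unfolding K_split_len gen_lvl[OF len] ..
  also have "\<dots> = (\<Sum>m\<le>J. real_of_int (digit (p s) m) * (1/2) ^ m)"
  proof (rule sum.cong)
    fix m
    have "real (card (Arr p s m)) = real_of_int (int (card (Arr p s m)))" by simp
    also have "\<dots> = real_of_int (digit (p s) m)" using count_Arr[OF bc] by simp
    finally show "real (card (Arr p s m)) * (1/2) ^ m = real_of_int (digit (p s) m) * (1/2) ^ m" by simp
  qed simp
  also have "\<dots> = Fl (p s) J / 2 ^ J" using bcpd_01[OF bc] by (intro digit_sum) auto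
  finally show ?thesis .
qed

lemma K_split:
  fixes Y :: "bool list \<Rightarrow> bool list option"
  assumes len: "\<And>u. u \<in> dom Y \<Longrightarrow> length (the (Y u)) = n"
  shows "K (dom Y) J = (\<Sum>s\<in>{s. length s = n}. K {u. Y u = Some s} J)"
proof -
  define D where "D = {u \<in> dom Y. length u \<le> J}"
  have fD: "finite D" unfolding D_def by (rule finite_lvl)
  have fS: "finite {s :: bool list. length s = n}" by (rule finite_len)
  have "(\<Sum>s\<in>{s. length s = n}. K {u. Y u = Some s} J) =
      (\<Sum>s\<in>{s. length s = n}. \<Sum>u\<in>D. if Y u = Some s then hw u else 0)"
  proof (rule sum.cong)
    fix s
    have "{u \<in> {u. Y u = Some s}. length u \<le> J} = {u \<in> D. Y u = Some s}" by (auto simp: D_def)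
    then show "K {u. Y u = Some s} J = (\<Sum>u\<in>D. if Y u = Some s then hw u else 0)"
      unfolding K_def using sum.inter_filter[OF fD, of hw "\<lambda>u. Y u = Some s"] by simp
  qed simp
  also have "\<dots> = (\<Sum>u\<in>D. \<Sum>s\<in>{s. length s = n}. if Y u = Some s then hw u else 0)"
    by (rule sum.swap)
  also have "\<dots> = (\<Sum>u\<in>D. hw u)"
  proof (rule sum.cong)
    fix u assume "u \<in> D"
    then obtain s0 where s0: "Y u = Some s0" by (auto simp: D_def)
    then have "length s0 = n" using len[of u] by (auto simp: domI)
    note s0 = s0 this
    have "(\<Sum>s\<in>{s. length s = n}. if Y u = Some s then hw u else 0) = (\<Sum>s\<in>{s. length s = n}. if s0 = s then hw u else 0)"
      using s0 by (intro sum.cong) auto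
    also have "\<dots> = hw u" by (subst sum.delta'[OF fS]) (simp add: s0)
    finally show "(\<Sum>s\<in>{s. length s = n}. if Y u = Some s then hw u else 0) = hw u" .
  qed simp
  finally show ?thesis by (simp add: K_def D_def)
qed

lemma sum_p: "bcpd p \<Longrightarrow> (\<Sum>s\<in>{s. length s = n}. p s) = 1"
proof (induction n)
  case 0
  have "p [] = 1" using 0 unfolding bcpd_def by blast
  moreover have "{s :: bool list. length s = 0} = {[]}" by auto
  ultimately show ?case by simp
next
  case (Suc n)
  have e: "{s :: bool list. length s = Suc n} = (\<lambda>(b, x). b @ [x]) ` ({s. length s = n} \<times> UNIV)"
  proof (intro equalityI subsetI)
    fix s :: "bool list" assume "s \<in> {s. length s = Suc n}"
    then show "s \<in> (\<lambda>(b, x). b @ [x]) ` ({s. length s = n} \<times> UNIV)"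
      by (cases s rule: rev_exhaust) auto
  qed auto
  have inj: "inj_on (\<lambda>(b, x). b @ [x]) ({s :: bool list. length s = n} \<times> UNIV)" by (auto simp: inj_on_def)
  have "(\<Sum>s\<in>{s. length s = Suc n}. p s) = (\<Sum>(b, x)\<in>{s. length s = n} \<times> UNIV. p (b @ [x]))"
    unfolding e by (subst sum.reindex[OF inj]) (simp add: case_prod_beta)
  also have "\<dots> = (\<Sum>b\<in>{s. length s = n}. \<Sum>x\<in>UNIV. p (b @ [x]))"
    by (rule sum.cartesian_product[symmetric])
  also have "\<dots> = (\<Sum>b\<in>{s. length s = n}. p b)"
  proof (rule sum.cong)
    fix b
    show "(\<Sum>x\<in>UNIV. p (b @ [x])) = p b" unfolding UNIV_bool using bcpd_split[OF Suc.prems, of b] by simp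
  qed simp
  finally show ?case using Suc by simp
qed

definition gE :: "bool list \<Rightarrow> ennreal" where "gE u = ennreal (real (length u) * (1/2) ^ length u)"

lemma hw_scale:
  assumes "length u \<le> j" shows "hw u = real (2 ^ (j - length u)) / 2 ^ j"
proof -
  have "real (2 ^ (j - length u)) = (2::real) ^ (j - length u)" by simp
  also have "\<dots> = 2 ^ j / 2 ^ length u" by (rule power_diff) (use assms in auto)
  finally show ?thesis by (simp add: hw_def power_one_over)
qed

lemma K_bound:
  assumes hs: "(hw has_sum x) A"
  shows "K A j \<le> Fl x j / 2 ^ j"
proof -
  define D where "D = {u \<in> A. length u \<le> j}"
  define N where "N = (\<Sum>u\<in>D. (2::nat) ^ (j - length u))"
  have "K A j = (\<Sum>u\<in>D. real (2 ^ (j - length u)) / 2 ^ j)"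
    unfolding K_def D_def by (rule sum.cong) (auto simp: hw_scale)
  also have "\<dots> = real N / 2 ^ j" unfolding N_def by (simp add: sum_divide_distrib)
  finally have KN: "K A j = real N / 2 ^ j" .
  have "real N / 2 ^ j \<le> x" using K_le[OF hs, of j] KN by simp
  then have "real N \<le> x * 2 ^ j" by (simp add: divide_le_eq)
  then have "int N \<le> Fl x j" unfolding Fl_def by (simp add: le_floor_iff)
  then have "real N \<le> real_of_int (Fl x j)" by linarith
  then show ?thesis unfolding KN by (simp add: divide_right_mono)
qed

lemma sum_if_lt: "L \<le> J \<Longrightarrow> (\<Sum>j<J. if j < L then c else 0) = real L * (c :: real)"
proof -
  assume "L \<le> J"
  then have "{j \<in> {..<J}. j < L} = {..<L}" by auto
  then show ?thesis using sum.inter_filter[of "{..<J}" "\<lambda>_. c" "\<lambda>j. j < L"] by simp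
qed

lemma fin_ident: "(\<Sum>u\<in>{u \<in> A. length u \<le> J}. real (length u) * (1/2) ^ length u) = (\<Sum>j<J. K A J - K A j)"
proof -
  define D where "D = {u \<in> A. length u \<le> J}"
  have fD: "finite D" unfolding D_def by (rule finite_lvl)
  have d: "K A J - K A j = (\<Sum>u\<in>D. if j < length u then hw u else 0)" if "j < J" for j
  proof -
    have "{u \<in> D. length u \<le> j} = {u \<in> A. length u \<le> j}" using that by (auto simp: D_def)
    then have "K A j = (\<Sum>u\<in>D. if length u \<le> j then hw u else 0)"
      unfolding K_def using sum.inter_filter[OF fD, of hw "\<lambda>u. length u \<le> j"] by simp
    moreover have "K A J = (\<Sum>u\<in>D. hw u)" by (simp add: K_def D_def)
    ultimately have "K A J - K A j = (\<Sum>u\<in>D. hw u - (if length u \<le> j then hw u else 0))"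
      by (simp add: sum_subtractf)
    also have "\<dots> = (\<Sum>u\<in>D. if j < length u then hw u else 0)" by (rule sum.cong) auto
    finally show ?thesis .
  qed
  have "(\<Sum>j<J. K A J - K A j) = (\<Sum>j<J. \<Sum>u\<in>D. if j < length u then hw u else 0)"
    using d by simp
  also have "\<dots> = (\<Sum>u\<in>D. \<Sum>j<J. if j < length u then hw u else 0)" by (rule sum.swap)
  also have "\<dots> = (\<Sum>u\<in>D. real (length u) * hw u)"
    by (rule sum.cong) (auto simp: D_def sum_if_lt)
  finally show ?thesis by (simp add: D_def hw_def)
qed

lemma cost_SUP: "infsum gE A = (SUP F\<in>{F. finite F \<and> F \<subseteq> A}. sum gE F)"
  by (rule nonneg_infsum_complete) simp

lemma gE_lvl: "sum gE {u \<in> A. length u \<le> J} = ennreal (\<Sum>j<J. K A J - K A j)"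
  unfolding gE_def fin_ident[symmetric] by (rule sum_ennreal) simp

lemma C1:
  assumes hs: "(hw has_sum 1) A"
  shows "infsum gE A \<le> (SUP J. ennreal (\<Sum>j<J. 1 - K A j))"
  unfolding cost_SUP
proof (rule SUP_least)
  fix F assume "F \<in> {F. finite F \<and> F \<subseteq> A}"
  then obtain J where J: "F \<subseteq> {u \<in> A. length u \<le> J}" using sub_lvl by blast
  have "sum gE F \<le> sum gE {u \<in> A. length u \<le> J}" by (rule sum_mono2[OF finite_lvl J]) simp
  also have "\<dots> = ennreal (\<Sum>j<J. K A J - K A j)" by (rule gE_lvl)
  also have "\<dots> \<le> ennreal (\<Sum>j<J. 1 - K A j)"
    by (intro ennreal_leI sum_mono) (use K_le[OF hs, of J] in simp)
  also have "\<dots> \<le> (SUP J. ennreal (\<Sum>j<J. 1 - K A j))" by (rule SUP_upper) simp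
  finally show "sum gE F \<le> (SUP J. ennreal (\<Sum>j<J. 1 - K A j))" .
qed

lemma C2:
  assumes hs: "(hw has_sum 1) A"
  shows "ennreal (\<Sum>j<J. 1 - K A j) \<le> infsum gE A"
proof (rule LIMSEQ_le_const2)
  show "(\<lambda>J'. ennreal (\<Sum>j<J. K A J' - K A j)) \<longlonglongrightarrow> ennreal (\<Sum>j<J. 1 - K A j)"
    by (intro tendsto_ennrealI tendsto_sum tendsto_diff hs_conv[OF hs] tendsto_const)
  show "\<exists>N. \<forall>J'\<ge>N. ennreal (\<Sum>j<J. K A J' - K A j) \<le> infsum gE A"
  proof (intro exI[of _ J] allI impI)
    fix J' assume "J \<le> J'"
    have "(\<Sum>j<J. K A J' - K A j) \<le> (\<Sum>j<J'. K A J' - K A j)"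
      by (rule sum_mono2) (use \<open>J \<le> J'\<close> K_mono in auto)
    then have "ennreal (\<Sum>j<J. K A J' - K A j) \<le> ennreal (\<Sum>j<J'. K A J' - K A j)" by (rule ennreal_leI)
    also have "\<dots> = sum gE {u \<in> A. length u \<le> J'}" by (rule gE_lvl[symmetric])
    also have "\<dots> \<le> infsum gE A" unfolding cost_SUP by (rule SUP_upper) (auto simp: finite_lvl)
    finally show "ennreal (\<Sum>j<J. K A J' - K A j) \<le> infsum gE A" .
  qed
qed

lemma hw_eq: "(\<lambda>u. (1/2::real) ^ length u) = hw"
  by (simp add: hw_def[abs_def])

lemma cost_eq: "entropy_cost Y = infsum gE (dom Y)"
  by (simp add: entropy_cost_def gE_def[abs_def])

lemma dom_filter: "{u \<in> dom Y. Y u = Some s} = {u. Y u = Some s}"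
  by auto

lemma genopt_rvg:
  assumes bc: "bcpd p"
  shows "is_rvg (genopt_gen p n) n p"
  unfolding is_rvg_def hw_eq dom_filter
proof (intro conjI ballI allI impI)
  fix u assume "u \<in> dom (genopt_gen p n)"
  then obtain s where "genopt_gen p n u = Some s" by auto
  then show "length (the (genopt_gen p n u)) = n" using gen_len by auto
next
  fix u v :: "bool list" assume u: "u \<in> dom (genopt_gen p n)" and v: "v \<noteq> []"
  then obtain s where "genopt_gen p n u = Some s" by auto
  then have "genopt_run p n u = Some (s, length u, [])" by (simp add: gen_iff)
  from run_append[OF this, of v] have "genopt_run p n (u @ v) = Some (s, length u, v)" by simp
  then have "genopt_gen p n (u @ v) = None" using v by (simp add: genopt_gen_def)
  then show "u @ v \<notin> dom (genopt_gen p n)" by auto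
next
  have "K (dom (genopt_gen p n)) = (\<lambda>J. \<Sum>s\<in>{s. length s = n}. Fl (p s) J / 2 ^ J)"
  proof
    fix J
    have "K (dom (genopt_gen p n)) J = (\<Sum>s\<in>{s. length s = n}. K {u. genopt_gen p n u = Some s} J)"
      by (rule K_split) (auto simp: gen_len)
    also have "\<dots> = (\<Sum>s\<in>{s. length s = n}. Fl (p s) J / 2 ^ J)"
      by (rule sum.cong) (auto simp: K_gen_s[OF bc])
    finally show "K (dom (genopt_gen p n)) J = (\<Sum>s\<in>{s. length s = n}. Fl (p s) J / 2 ^ J)" .
  qed
  moreover have "(\<lambda>J. \<Sum>s\<in>{s. length s = n}. Fl (p s) J / 2 ^ J) \<longlonglongrightarrow> (\<Sum>s\<in>{s. length s = n}. p s)"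
    by (intro tendsto_sum Fl_lim)
  ultimately have "K (dom (genopt_gen p n)) \<longlonglongrightarrow> 1" using sum_p[OF bc, of n] by simp
  then show "(hw has_sum 1) (dom (genopt_gen p n))" by (rule hs_levels)
next
  fix s :: "bool list" assume len: "length s = n"
  have "K {u. genopt_gen p n u = Some s} = (\<lambda>J. Fl (p s) J / 2 ^ J)"
    using K_gen_s[OF bc len] by auto
  then have "K {u. genopt_gen p n u = Some s} \<longlonglongrightarrow> p s" using Fl_lim by simp
  then show "(hw has_sum p s) {u. genopt_gen p n u = Some s}" by (rule hs_levels)
qed

lemma K_rvg_le:
  assumes bc: "bcpd p" and Y: "is_rvg Y n p"
  shows "K (dom Y) j \<le> K (dom (genopt_gen p n)) j"
proof -
  have lenY: "\<And>u. u \<in> dom Y \<Longrightarrow> length (the (Y u)) = n" using Y by (simp add: is_rvg_def)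
  have hsY: "\<And>s. length s = n \<Longrightarrow> (hw has_sum p s) {u. Y u = Some s}"
    using Y unfolding is_rvg_def hw_eq dom_filter by blast
  have "K (dom Y) j = (\<Sum>s\<in>{s. length s = n}. K {u. Y u = Some s} j)" by (rule K_split[OF lenY])
  also have "\<dots> \<le> (\<Sum>s\<in>{s. length s = n}. Fl (p s) j / 2 ^ j)"
    by (rule sum_mono) (auto intro: K_bound hsY)
  also have "\<dots> = (\<Sum>s\<in>{s. length s = n}. K {u. genopt_gen p n u = Some s} j)"
    by (rule sum.cong) (auto simp: K_gen_s[OF bc])
  also have "\<dots> = K (dom (genopt_gen p n)) j"
    by (rule K_split[symmetric]) (auto simp: gen_len)
  finally show ?thesis .
qed

theorem theorem4p6:
  fixes p :: "bool list \<Rightarrow> real" and n :: nat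
  assumes "bcpd p"
  shows "is_rvg (genopt_gen p n) n p \<and>
         entropy_cost (genopt_gen p n) = (INF Y \<in> {Y. is_rvg Y n p}. entropy_cost Y)"
proof
  note bc = assms
  show G: "is_rvg (genopt_gen p n) n p" by (rule genopt_rvg[OF bc])
  show "entropy_cost (genopt_gen p n) = (INF Y \<in> {Y. is_rvg Y n p}. entropy_cost Y)"
  proof (rule antisym)
    show "entropy_cost (genopt_gen p n) \<le> (INF Y \<in> {Y. is_rvg Y n p}. entropy_cost Y)"
    proof (rule INF_greatest)
      fix Y assume "Y \<in> {Y. is_rvg Y n p}"
      then have Y: "is_rvg Y n p" by simp
      have hsY: "(hw has_sum 1) (dom Y)" using Y unfolding is_rvg_def hw_eq by blast
      have hsG: "(hw has_sum 1) (dom (genopt_gen p n))" using G unfolding is_rvg_def hw_eq by blast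
      have "entropy_cost (genopt_gen p n) \<le> (SUP J. ennreal (\<Sum>j<J. 1 - K (dom (genopt_gen p n)) j))"
        unfolding cost_eq by (rule C1[OF hsG])
      also have "\<dots> \<le> entropy_cost Y"
      proof (rule SUP_least)
        fix J
        have "ennreal (\<Sum>j<J. 1 - K (dom (genopt_gen p n)) j) \<le> ennreal (\<Sum>j<J. 1 - K (dom Y) j)"
          by (intro ennreal_leI sum_mono) (use K_rvg_le[OF bc Y] in auto)
        also have "\<dots> \<le> entropy_cost Y" unfolding cost_eq by (rule C2[OF hsY])
        finally show "ennreal (\<Sum>j<J. 1 - K (dom (genopt_gen p n)) j) \<le> entropy_cost Y" .
      qed
      finally show "entropy_cost (genopt_gen p n) \<le> entropy_cost Y" .
    qed
    show "(INF Y \<in> {Y. is_rvg Y n p}. entropy_cost Y) \<le> entropy_cost (genopt_gen p n)"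
      by (rule INF_lower) (simp add: G)
  qed
qed

end
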